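(* Let $n \ge 1$, $K \ge 1$, let $\mu_1,\dots,\mu_K \in \mathbb{R}^n$, let $\Sigma_1,\dots,\Sigma_K \in \mathbb{R}^{n\times n}$ be symmetric positive-definite matrices, let $\kappa_1,\dots,\kappa_K \in [0,1)$, and let $\epsilon \le 0$. For $k=1,\dots,K$ put $r_k := \sqrt{F^{-1}_{\chi^2_n}(\kappa_k)}$ and define the closed set $$\overline{R} := \bigcup_{k=1}^K \left\{ x \in \mathbb{R}^n \;\middle|\; (x-\mu_k)^T\Sigma_k^{-1}(x-\mu_k) \le r_k^2 \right\}.$$ For $p \in \mathbb{R}^n$ with $p\neq\mu_k$ for all $k$, define $$S(p) := \left\{ x \in \mathbb{R}^n \;\middle|\; \frac{(\mu_k - p)^{T}\Sigma_k^{-1}(x-p)}{\big\|\Sigma_k^{-1/2}(\mu_k - p)\big\|^2} \le \max\!\left(1 - \frac{r_k}{\big\|\Sigma_k^{-1/2}(\mu_k-p)\big\|},\, \epsilon\right) \text{ for all } k=1,\dots,K \right\}.$$ Then for every $p \in \mathbb{R}^n \setminus \overline{R}$, the point $p$ lies in the interior $\mathring{S}(p)$ of $S(p)$, and $\mathring{S}(p) \subseteq \mathbb{R}^n \setminus \overline{R}$.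
   Context: $F_{\chi^2_n}$ denotes the cumulative distribution function of the chi-squared distribution with $n$ degrees of freedom, and $F^{-1}_{\chi^2_n}$ its inverse. $\|\cdot\|$ is the Euclidean norm. For a symmetric positive-definite $\Sigma = V\,\mathrm{diag}(\sigma_1,\dots,\sigma_n)V^T$ (orthogonal $V$, $\sigma_i>0$), $\Sigma^{-1/2} := V\,\mathrm{diag}(\sigma_1^{-1/2},\dots,\sigma_n^{-1/2})V^T$. The set $\overline{R}$ is the approximate confidence region of a Gaussian mixture model (union of the level-$\kappa_k$ confidence ellipsoids of its components $\mathcal N(\mu_k,\Sigma_k)$), and $S(p)$ is the probabilistically safe corridor around $p$, bounded by hyperplanes tangent to these ellipsoids. Note every $p\notin\overline{R}$ automatically satisfies $p\neq\mu_k$ for all $k$. *)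

theory Defs
  imports "HOL-Analysis.Analysis"
begin

definition chi2_density :: "nat \<Rightarrow> real \<Rightarrow> real" where
  "chi2_density n t =
     (if t > 0 then t powr (real n / 2 - 1) * exp (- t / 2) / (2 powr (real n / 2) * Gamma (real n / 2))
      else 0)"

definition chi2_cdf :: "nat \<Rightarrow> real \<Rightarrow> real" where
  "chi2_cdf n x = (LBINT t:{..x}. chi2_density n t)"

definition chi2_cdf_inv :: "nat \<Rightarrow> real \<Rightarrow> real" where
  "chi2_cdf_inv n \<kappa> = (THE x. 0 \<le> x \<and> chi2_cdf n x = \<kappa>)"

definition diag_mat :: "('n::finite \<Rightarrow> real) \<Rightarrow> real^'n^'n" where
  "diag_mat d = (\<chi> i j. if i = j then d i else 0)"

definition sym_pos_def :: "real^'n^'n \<Rightarrow> bool" where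
  "sym_pos_def A \<longleftrightarrow> transpose A = A \<and> (\<forall>x. x \<noteq> 0 \<longrightarrow> 0 < x \<bullet> (A *v x))"

definition mat_inv_sqrt :: "real^'n^'n \<Rightarrow> real^'n^'n" where
  "mat_inv_sqrt A = (SOME M. \<exists>V \<sigma>. orthogonal_matrix V \<and> (\<forall>i. 0 < \<sigma> i) \<and>
       A = V ** diag_mat \<sigma> ** transpose V \<and>
       M = V ** diag_mat (\<lambda>i. 1 / sqrt (\<sigma> i)) ** transpose V)"

definition Rbar :: "nat \<Rightarrow> (nat \<Rightarrow> real^'n::finite) \<Rightarrow> (nat \<Rightarrow> real^'n^'n) \<Rightarrow> (nat \<Rightarrow> real) \<Rightarrow> (real^'n) set" where
  "Rbar K \<mu> \<Sigma> \<kappa> = (\<Union>k\<in>{1..K}. {x. (x - \<mu> k) \<bullet> (matrix_inv (\<Sigma> k) *v (x - \<mu> k))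
        \<le> (sqrt (chi2_cdf_inv CARD('n) (\<kappa> k)))\<^sup>2})"

definition Scorr :: "nat \<Rightarrow> (nat \<Rightarrow> real^'n::finite) \<Rightarrow> (nat \<Rightarrow> real^'n^'n) \<Rightarrow> (nat \<Rightarrow> real) \<Rightarrow> real \<Rightarrow> real^'n \<Rightarrow> (real^'n) set" where
  "Scorr K \<mu> \<Sigma> \<kappa> \<epsilon> p = {x. \<forall>k\<in>{1..K}.
      ((\<mu> k - p) \<bullet> (matrix_inv (\<Sigma> k) *v (x - p))) / (norm (mat_inv_sqrt (\<Sigma> k) *v (\<mu> k - p)))\<^sup>2
      \<le> max (1 - sqrt (chi2_cdf_inv CARD('n) (\<kappa> k)) / norm (mat_inv_sqrt (\<Sigma> k) *v (\<mu> k - p))) \<epsilon>}"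

end

theory Submission
  imports Defs
begin


lemma chi2_density_alt:
  "chi2_density n t = indicator {0..} t * t powr (real n / 2 - 1) / exp (t/2)
      / (2 powr (real n / 2) * Gamma (real n / 2))"
  by (auto simp: chi2_density_def indicator_def exp_minus field_simps)

lemma chi2_density_nonneg: "n > 0 \<Longrightarrow> chi2_density n t \<ge> 0"
  unfolding chi2_density_def by (auto intro!: divide_nonneg_pos Gamma_real_pos)

lemma chi2_density_meas[measurable]: "chi2_density n \<in> borel_measurable borel"
  unfolding chi2_density_alt by measurable

lemma chi2_nn:
  assumes "n > 0"
  shows "(\<integral>\<^sup>+t. ennreal (chi2_density n t) \<partial>lborel) = 1"
proof -
  define a where "a = real n / 2"
  have a: "a > 0" using assms by (simp add: a_def)
  define C where "C = 2 powr a * Gamma a"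
  have C: "C > 0" using a by (simp add: C_def Gamma_real_pos)
  define h where "h t = ennreal (indicator {0..} t * t powr (a - 1) / exp (t/2))" for t :: real
  have hm[measurable]: "h \<in> borel_measurable borel" unfolding h_def by measurable
  have "(\<integral>\<^sup>+t. h t \<partial>lborel) = ennreal \<bar>2\<bar> * (\<integral>\<^sup>+x. h (0 + 2 * x) \<partial>lborel)"
    by (rule nn_integral_real_affine) (auto)
  also have "(\<lambda>x. h (0 + 2 * x)) = (\<lambda>x. ennreal (2 powr (a - 1)) *
       ennreal (indicator {0..} x * x powr (a - 1) / exp x))"
    by (rule ext) (auto simp: h_def indicator_def powr_mult ennreal_mult'[symmetric])
  also have "(\<integral>\<^sup>+x. ennreal (2 powr (a - 1)) *
       ennreal (indicator {0..} x * x powr (a - 1) / exp x) \<partial>lborel) =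
       ennreal (2 powr (a - 1)) * Gamma a"
    by (subst nn_integral_cmult) (auto simp: Gamma_conv_nn_integral_real[OF a])
  also have "ennreal \<bar>2\<bar> * (ennreal (2 powr (a - 1)) * Gamma a) = ennreal C"
  proof -
    have "(2::real) * (2 powr (a - 1) * Gamma a) = C"
      by (simp add: C_def powr_diff)
    moreover have "ennreal \<bar>2\<bar> * (ennreal (2 powr (a - 1)) * Gamma a) =
       ennreal (2 * (2 powr (a - 1) * Gamma a))"
      using a by (simp add: ennreal_mult Gamma_real_pos less_imp_le)
    ultimately show ?thesis by simp
  qed
  finally have hint: "(\<integral>\<^sup>+t. h t \<partial>lborel) = ennreal C" .
  have eq: "(\<lambda>t. ennreal (chi2_density n t)) = (\<lambda>t. h t * ennreal (1 / C))"
    by (rule ext) (auto simp: chi2_density_alt h_def a_def[symmetric] C_def[symmetric] ennreal_mult'[symmetric] C)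
  show ?thesis
    unfolding eq using C by (simp add: nn_integral_multc hint ennreal_mult'[symmetric])
qed

lemma chi2_integrable: "n > 0 \<Longrightarrow> integrable lborel (chi2_density n)"
  by (rule integrableI_nn_integral_finite[where x=1]) (auto simp: chi2_nn chi2_density_nonneg)

lemma chi2_total: assumes "n > 0" shows "integral\<^sup>L lborel (chi2_density n) = 1"
proof -
  have "(\<integral>\<^sup>+t. ennreal (chi2_density n t) \<partial>lborel) = ennreal (integral\<^sup>L lborel (chi2_density n))"
    by (rule nn_integral_eq_integral) (auto simp: chi2_integrable assms chi2_density_nonneg)
  then have "ennreal (integral\<^sup>L lborel (chi2_density n)) = 1" using chi2_nn[OF assms] by simp
  moreover have "integral\<^sup>L lborel (chi2_density n) \<ge> 0"
    by (rule integral_nonneg_AE) (auto simp: chi2_density_nonneg assms)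
  ultimately show ?thesis by simp
qed

lemma chi2_density_neg: "t \<le> 0 \<Longrightarrow> chi2_density n t = 0"
  by (simp add: chi2_density_def)

lemma chi2_cdf_lint: "0 \<le> x \<Longrightarrow> chi2_cdf n x = (LBINT t:{0..x}. chi2_density n t)"
  unfolding chi2_cdf_def set_lebesgue_integral_def
  by (rule Bochner_Integration.integral_cong) (auto simp: indicator_def chi2_density_neg)


lemma chi2_setint: "n > 0 \<Longrightarrow> A \<in> sets lborel \<Longrightarrow> set_integrable lborel A (chi2_density n)"
  unfolding set_integrable_def by (rule integrable_mult_indicator) (auto simp: chi2_integrable)

lemma chi2_cdf_int:
  assumes "n > 0" "0 \<le> x"
  shows "chi2_cdf n x = integral {0..x} (chi2_density n)" "chi2_density n integrable_on {0..x}"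
  using set_borel_integral_eq_integral[OF chi2_setint[OF assms(1), of "{0..x}"]]
    chi2_cdf_lint[OF assms(2)] by auto

lemma chi2_cdf_lim:
  assumes "n > 0"
  shows "(chi2_cdf n \<longlongrightarrow> 1) at_top"
proof -
  have "((\<lambda>b. LBINT t:{0..b}. chi2_density n t) \<longlongrightarrow> (LBINT t:{0..}. chi2_density n t)) at_top"
    by (rule tendsto_set_lebesgue_integral_at_top) (auto simp: chi2_setint assms)
  moreover have "(LBINT t:{0..}. chi2_density n t) = 1"
    unfolding set_lebesgue_integral_def using chi2_total[OF assms]
    by (metis (no_types, lifting) Bochner_Integration.integral_cong atLeast_iff chi2_density_neg
        indicator_simps(1,2) nle_le scaleR_one scaleR_zero_left)
  ultimately have "((\<lambda>b. LBINT t:{0..b}. chi2_density n t) \<longlongrightarrow> 1) at_top" by simp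
  then show ?thesis
    by (rule Lim_transform_eventually) (auto simp: eventually_at_top_linorder chi2_cdf_lint intro!: exI[of _ 0])
qed

lemma chi2_density_pos: "n > 0 \<Longrightarrow> t > 0 \<Longrightarrow> chi2_density n t > 0"
  unfolding chi2_density_def by (auto intro!: divide_pos_pos Gamma_real_pos)

lemma chi2_density_cont: "n > 0 \<Longrightarrow> m > 0 \<Longrightarrow> continuous_on {m..y} (chi2_density n)"
proof -
  assume n: "n > 0" and m: "m > 0"
  have "continuous_on {m..y} (\<lambda>t. t powr (real n / 2 - 1) * exp (- t / 2) /
     (2 powr (real n / 2) * Gamma (real n / 2)))"
    using m n by (intro continuous_intros) (auto simp: Gamma_real_pos less_imp_neq[symmetric])
  then show ?thesis
    by (rule continuous_on_cong[THEN iffD1, rotated 2]) (use m in \<open>auto simp: chi2_density_def\<close>)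
qed

lemma chi2_int_pos:
  assumes n: "n > 0" and m: "m > 0" "m < y"
  shows "integral {m..y} (chi2_density n) > 0"
proof -
  have "0 \<le> y" using m by simp
  have int: "chi2_density n integrable_on {m..y}"
    by (rule integrable_on_subinterval[OF chi2_cdf_int(2)[OF n \<open>0 \<le> y\<close>]]) (use m in auto)
  have ge: "integral {m..y} (chi2_density n) \<ge> 0"
    by (rule integral_nonneg[OF int]) (auto simp: chi2_density_nonneg n)
  show ?thesis
  proof (rule ccontr)
    assume "\<not> ?thesis"
    then have "integral {m..y} (chi2_density n) = 0" using ge by simp
    then have "(chi2_density n has_integral 0) (cbox m y)"
      using int by (metis cbox_interval has_integral_integral)
    moreover have "y \<in> cbox m y" using m by auto
    moreover have "box m y \<noteq> {}" using m by auto
    ultimately have "chi2_density n y = 0"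
      by (intro has_integral_0_cbox_imp_0[of m y "chi2_density n" y])
         (auto simp: chi2_density_cont[OF n] m(1) chi2_density_nonneg n)
    then show False using chi2_density_pos[OF n, of y] m by auto
  qed
qed

lemma chi2_cdf_strict:
  assumes n: "n > 0" and xy: "0 \<le> x" "x < y"
  shows "chi2_cdf n x < chi2_cdf n y"
proof -
  define m where "m = (x + y) / 2"
  have m: "x < m" "m < y" "0 < m" using xy by (auto simp: m_def)
  have iy: "chi2_density n integrable_on {0..y}" using chi2_cdf_int(2)[OF n, of y] xy by simp
  have i1: "chi2_density n integrable_on {x..m}"
    using iy by (rule integrable_on_subinterval) (use xy m in auto)
  have "integral {0..y} (chi2_density n) = integral {0..m} (chi2_density n) + integral {m..y} (chi2_density n)"
    by (rule Henstock_Kurzweil_Integration.integral_combine[symmetric]) (use m xy iy in auto)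
  moreover have "integral {0..m} (chi2_density n) = integral {0..x} (chi2_density n) + integral {x..m} (chi2_density n)"
    by (rule Henstock_Kurzweil_Integration.integral_combine[symmetric])
       (use m xy iy in \<open>auto intro: integrable_on_subinterval\<close>)
  moreover have "integral {x..m} (chi2_density n) \<ge> 0"
    by (rule integral_nonneg[OF i1]) (auto simp: chi2_density_nonneg n)
  moreover have "integral {m..y} (chi2_density n) > 0" using chi2_int_pos[OF n m(3,2)] .
  ultimately show ?thesis using chi2_cdf_int(1)[OF n] xy by simp
qed

lemma chi2_cdf_cont: "n > 0 \<Longrightarrow> 0 \<le> b \<Longrightarrow> continuous_on {0..b} (chi2_cdf n)"
  using indefinite_integral_continuous_1[OF chi2_cdf_int(2), of n b]
  by (rule continuous_on_cong[THEN iffD1, rotated 2]) (auto simp: chi2_cdf_int)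

lemma chi2_cdf_inv_nonneg:
  assumes n: "n > 0" and k: "0 \<le> \<kappa>" "\<kappa> < 1"
  shows "chi2_cdf_inv n \<kappa> \<ge> 0"
proof -
  have "\<forall>\<^sub>F b in at_top. \<kappa> < chi2_cdf n b"
    by (rule order_tendstoD(1)[OF chi2_cdf_lim[OF n] k(2)])
  then obtain N where N: "\<And>b. b \<ge> N \<Longrightarrow> \<kappa> < chi2_cdf n b"
    by (auto simp: eventually_at_top_linorder)
  define b where "b = max N 0"
  have b: "b \<ge> 0" "\<kappa> < chi2_cdf n b" using N by (auto simp: b_def)
  have "chi2_cdf n 0 = 0" using chi2_cdf_int(1)[OF n, of 0] by simp
  then obtain x where x: "0 \<le> x" "chi2_cdf n x = \<kappa>"
    using IVT'[of "chi2_cdf n" 0 \<kappa> b] b k chi2_cdf_cont[OF n] by auto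
  have "\<exists>!x. 0 \<le> x \<and> chi2_cdf n x = \<kappa>"
  proof (rule ex1I[of _ x])
    fix y assume y: "0 \<le> y \<and> chi2_cdf n y = \<kappa>"
    show "y = x"
    proof (rule ccontr)
      assume "y \<noteq> x"
      then have "y < x \<or> x < y" by auto
      then show False using chi2_cdf_strict[OF n] x y by force
    qed
  qed (use x in auto)
  then show ?thesis unfolding chi2_cdf_inv_def by (rule theI'[THEN conjunct1])
qed



lemma sym_dot: 
  fixes A :: "real^'n^'n"
  assumes "transpose A = A"
  shows "x \<bullet> (A *v y) = (A *v x) \<bullet> y"
  by (metis assms dot_lmul_matrix transpose_matrix_vector)

lemma lin_zero_aux:
  fixes c E :: real
  assumes "\<And>t. 2 * t * c \<le> t\<^sup>2 * E"
  shows "c = 0"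
proof (rule ccontr)
  assume c: "c \<noteq> 0"
  define t where "t = c / (\<bar>E\<bar> + 1)"
  have "2 * t * c \<le> t\<^sup>2 * E" by (rule assms)
  hence "2 * c * c / (\<bar>E\<bar> + 1) \<le> c * c * E / ((\<bar>E\<bar> + 1) * (\<bar>E\<bar> + 1))"
    by (simp add: t_def power2_eq_square)
  define D where "D = \<bar>E\<bar> + 1"
  have D: "D > 0" by (simp add: D_def)
  have h: "2 * c * c / D \<le> c * c * E / (D * D)" using \<open>2 * c * c / (\<bar>E\<bar> + 1) \<le> _\<close> by (simp add: D_def)
  have "(2 * c * c / D) * (D * D) \<le> (c * c * E / (D * D)) * (D * D)"
    by (rule mult_right_mono[OF h]) simp
  hence "2 * (c * c) * (\<bar>E\<bar> + 1) \<le> (c * c) * E"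
    using D by (simp add: D_def[symmetric] power2_eq_square)
  moreover have "c * c > 0" using c by (meson linorder_neq_iff mult_neg_neg mult_pos_pos)
  ultimately have "2 * (\<bar>E\<bar> + 1) \<le> E"
    by (metis mult.commute mult_le_cancel_left_pos mult.left_commute)
  thus False by (cases "E \<ge> 0") auto
qed

lemma sym_eigen_sub:
  fixes A :: "real^'n^'n"
  assumes sym: "transpose A = A"
  shows "subspace S \<Longrightarrow> (\<forall>x\<in>S. A *v x \<in> S) \<Longrightarrow>
    \<exists>B \<subseteq> S. pairwise orthogonal B \<and> (\<forall>b\<in>B. norm b = 1 \<and> (\<exists>l. A *v b = l *\<^sub>R b)) \<and> span B = S"
proof (induction "dim S" arbitrary: S rule: less_induct)
  case less
  note sub = less.prems(1) and inv = less.prems(2)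
  show ?case
  proof (cases "S = {0}")
    case True
    then show ?thesis by (intro exI[of _ "{}"]) auto
  next
    case False
    then obtain x0 where x0: "x0 \<in> S" "x0 \<noteq> 0" using sub subspace_0 by blast
    define q where "q x = x \<bullet> (A *v x)" for x
    have qc: "continuous_on UNIV q" unfolding q_def
      by (intro continuous_intros linear_continuous_on matrix_vector_mul_linear)
    have "compact (S \<inter> sphere 0 1)"
      by (intro closed_Int_compact closed_subspace sub compact_sphere)
    moreover have "x0 /\<^sub>R norm x0 \<in> S \<inter> sphere 0 1"
      using x0 sub by (auto simp: subspace_scale)
    ultimately obtain v where v: "v \<in> S \<inter> sphere 0 1" and vmax: "\<And>y. y \<in> S \<inter> sphere 0 1 \<Longrightarrow> q y \<le> q v"
      using continuous_attains_sup[of "S \<inter> sphere 0 1" q] qc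
      by (metis continuous_on_subset empty_iff subset_UNIV)
    have vS: "v \<in> S" and vn: "norm v = 1" using v by auto
    have vv: "v \<bullet> v = 1" using vn by (simp add: norm_eq_1)
    have qscale: "q (c *\<^sub>R y) = c\<^sup>2 * q y" for c y
      by (simp add: q_def matrix_vector_mult_scaleR power2_eq_square)
    have qle: "q y \<le> q v * (norm y)\<^sup>2" if "y \<in> S" for y
    proof (cases "y = 0")
      case True then show ?thesis by (simp add: q_def)
    next
      case False
      have "y /\<^sub>R norm y \<in> S \<inter> sphere 0 1" using that False sub by (auto simp: subspace_scale)
      hence "q (y /\<^sub>R norm y) \<le> q v" by (rule vmax)
      hence "q y / (norm y)\<^sup>2 \<le> q v" by (simp add: qscale power_divide divide_inverse mult.commute power_inverse)
      thus ?thesis using False by (simp add: divide_le_eq)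
    qed
    have perp: "w \<bullet> (A *v v) = 0" if w: "w \<in> S" "w \<bullet> v = 0" for w
    proof -
      have "2 * t * (w \<bullet> (A *v v)) \<le> t\<^sup>2 * (q v * (w \<bullet> w) - q w)" for t
      proof -
        have "v + t *\<^sub>R w \<in> S" using sub vS w by (simp add: subspace_add subspace_scale)
        hence "q (v + t *\<^sub>R w) \<le> q v * (norm (v + t *\<^sub>R w))\<^sup>2" by (rule qle)
        moreover have "q (v + t *\<^sub>R w) = q v + 2 * t * (w \<bullet> (A *v v)) + t\<^sup>2 * q w"
          using sym_dot[OF sym, of v w]
          by (simp add: q_def matrix_vector_right_distrib matrix_vector_mult_scaleR inner_add_left
              inner_add_right inner_commute power2_eq_square algebra_simps)
        moreover have "(norm (v + t *\<^sub>R w))\<^sup>2 = 1 + t\<^sup>2 * (w \<bullet> w)"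
        proof -
          have "(norm (v + t *\<^sub>R w))\<^sup>2 = (v + t *\<^sub>R w) \<bullet> (v + t *\<^sub>R w)"
            by (simp only: power2_norm_eq_inner)
          also have "\<dots> = 1 + t\<^sup>2 * (w \<bullet> w)"
            using w vv by (simp add: inner_add_left inner_add_right inner_commute power2_eq_square)
          finally show ?thesis .
        qed
        ultimately show ?thesis by (simp add: algebra_simps)
      qed
      thus ?thesis by (rule lin_zero_aux)
    qed
    define l where "l = q v"
    define u where "u = A *v v - l *\<^sub>R v"
    have uS: "u \<in> S" unfolding u_def using sub inv vS by (simp add: subspace_diff subspace_scale)
    have uv: "u \<bullet> v = 0" unfolding u_def l_def q_def using vv by (simp add: inner_diff_left inner_commute inner_diff_right)
    have "u \<bullet> u = u \<bullet> (A *v v) - l * (u \<bullet> v)" by (simp add: u_def inner_diff_right)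
    also have "\<dots> = 0" using perp[OF uS uv] uv by simp
    finally have "u = 0" by simp
    hence eig: "A *v v = l *\<^sub>R v" by (simp add: u_def)
    define S' where "S' = {x \<in> S. x \<bullet> v = 0}"
    have sub': "subspace S'" using sub unfolding S'_def subspace_def
      by (auto simp: inner_add_left)
    have inv': "\<forall>x\<in>S'. A *v x \<in> S'"
    proof
      fix x assume x: "x \<in> S'"
      have "(A *v x) \<bullet> v = x \<bullet> (A *v v)" using sym_dot[OF sym, of x v] by simp
      also have "\<dots> = 0" using x eig by (simp add: S'_def inner_commute)
      finally show "A *v x \<in> S'" using x inv by (auto simp: S'_def)
    qed
    have "dim S' < dim S"
    proof (rule dim_psubset)
      have "span S' = S'" "span S = S" using sub sub' by (auto simp: span_eq_iff)
      moreover have "v \<notin> S'" using vv by (simp add: S'_def)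
      moreover have "S' \<subseteq> S" by (auto simp: S'_def)
      ultimately have "S' \<subset> S" using vS by blast
      thus "span S' \<subset> span S" using sub sub' by (metis span_eq_iff)
    qed
    then obtain B' where B': "B' \<subseteq> S'" "pairwise orthogonal B'"
      "\<forall>b\<in>B'. norm b = 1 \<and> (\<exists>l. A *v b = l *\<^sub>R b)" "span B' = S'"
      using less.hyps[OF _ sub' inv'] by blast
    show ?thesis
    proof (intro exI[of _ "insert v B'"] conjI)
      show "insert v B' \<subseteq> S" using vS B'(1) by (auto simp: S'_def)
      show "pairwise orthogonal (insert v B')"
        using B'(1,2) by (auto simp: pairwise_insert S'_def orthogonal_def inner_commute)
      show "\<forall>b\<in>insert v B'. norm b = 1 \<and> (\<exists>l. A *v b = l *\<^sub>R b)"
        using B'(3) vn eig by auto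
      show "span (insert v B') = S"
      proof
        show "span (insert v B') \<subseteq> S"
          using \<open>insert v B' \<subseteq> S\<close> sub by (simp add: span_minimal)
        show "S \<subseteq> span (insert v B')"
        proof
          fix x assume x: "x \<in> S"
          have "x - (x \<bullet> v) *\<^sub>R v \<in> S'"
            using x vS sub vv by (auto simp: S'_def subspace_diff subspace_scale inner_diff_left)
          hence "x - (x \<bullet> v) *\<^sub>R v \<in> span (insert v B')"
            using B'(4) span_mono[of B' "insert v B'"] by auto
          moreover have "(x \<bullet> v) *\<^sub>R v \<in> span (insert v B')"
            by (simp add: span_base span_scale)
          ultimately have "x - (x \<bullet> v) *\<^sub>R v + (x \<bullet> v) *\<^sub>R v \<in> span (insert v B')"
            by (rule span_add)
          thus "x \<in> span (insert v B')" by simp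
        qed
      qed
    qed
  qed
qed

lemma spectral:
  fixes A :: "real^'n^'n"
  assumes sym: "transpose A = A"
  shows "\<exists>V \<sigma>. orthogonal_matrix V \<and> (\<forall>i. A *v column i V = \<sigma> i *\<^sub>R column i V) \<and>
     A = V ** diag_mat \<sigma> ** transpose V"
proof -
  obtain B where B: "pairwise orthogonal B" "\<forall>b\<in>B. norm b = 1 \<and> (\<exists>l. A *v b = l *\<^sub>R b)"
    "span B = UNIV"
    using sym_eigen_sub[OF sym, of UNIV] by auto
  have "0 \<notin> B" using B(2) by force
  hence ind: "independent B" using B(1) by (rule pairwise_orthogonal_independent[rotated])
  hence fin: "finite B" by (rule finiteI_independent)
  have "card B = dim (span B)" using ind by (simp add: dim_eq_card_independent)
  also have "\<dots> = CARD('n)" using B(3) by simp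
  finally obtain f where f: "bij_betw f (UNIV::'n set) B"
    using finite_same_card_bij[OF _ fin, of "UNIV::'n set"] by auto
  have fB: "f i \<in> B" for i using f by (auto simp: bij_betw_def)
  have finj: "f i = f j \<Longrightarrow> i = j" for i j using f by (auto simp: bij_betw_def inj_def)
  define \<sigma> where "\<sigma> i = (SOME l. A *v f i = l *\<^sub>R f i)" for i
  have eig: "A *v f i = \<sigma> i *\<^sub>R f i" for i
    unfolding \<sigma>_def using B(2) fB[of i] by (metis (mono_tags, lifting) someI_ex)
  define V where "V = (\<chi> r c. f c $ r)"
  have col: "column i V = f i" for i by (simp add: V_def column_def vec_eq_iff)
  have orth: "orthogonal_matrix V"
    unfolding orthogonal_matrix_orthonormal_columns col
    using B(1,2) fB finj by (auto simp: pairwise_def) (metis fB finj)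
  have AV: "A ** V = V ** diag_mat \<sigma>"
  proof -
    have e: "(\<Sum>k\<in>UNIV. A $ i $ k * f j $ k) = \<sigma> j * f j $ i" for i j
      using arg_cong[OF eig[of j], of "\<lambda>x. x $ i"] by (simp add: matrix_vector_mult_def)
    show ?thesis
      by (simp add: vec_eq_iff matrix_matrix_mult_def diag_mat_def V_def e if_distrib cong: if_cong)
  qed
  have "A = A ** (V ** transpose V)" using orth by (simp add: orthogonal_matrix_def)
  also have "\<dots> = V ** diag_mat \<sigma> ** transpose V" by (simp add: matrix_mul_assoc AV)
  finally have "A = V ** diag_mat \<sigma> ** transpose V" .
  moreover have "\<forall>i. A *v column i V = \<sigma> i *\<^sub>R column i V" using eig col by simp
  ultimately show ?thesis using orth by blast
qed



lemma diag_mult: "diag_mat a ** diag_mat b = diag_mat (\<lambda>i. a i * b i)"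
proof -
  have "(\<Sum>k\<in>UNIV. (if i = k then a i else 0) * (if k = j then b k else 0)) = (if i = j then a i * b i else 0)" for i j
  proof (cases "i = j")
    case True
    have "(\<Sum>k\<in>UNIV. (if i = k then a i else 0) * (if k = j then b k else 0)) =
          (\<Sum>k\<in>UNIV. if k = j then a j * b j else 0)"
      using True by (intro sum.cong) auto
    then show ?thesis using True by simp
  qed (auto intro!: sum.neutral)
  thus ?thesis by (simp add: vec_eq_iff matrix_matrix_mult_def diag_mat_def)
qed

lemma diag_transpose: "transpose (diag_mat a) = diag_mat a"
  by (simp add: vec_eq_iff transpose_def diag_mat_def)

lemma diag_one: "(\<And>i. a i = 1) \<Longrightarrow> diag_mat a = mat 1"
  by (simp add: vec_eq_iff mat_def diag_mat_def)

lemma conj_mult: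
  assumes "transpose W ** W = mat 1"
  shows "(W ** X ** transpose W) ** (W ** Y ** transpose W) = W ** (X ** Y) ** transpose W"
proof -
  have "(W ** X ** transpose W) ** (W ** Y ** transpose W) = W ** X ** (transpose W ** W) ** Y ** transpose W"
    by (simp add: matrix_mul_assoc)
  also have "\<dots> = W ** (X ** Y) ** transpose W" using assms by (simp add: matrix_mul_assoc)
  finally show ?thesis .
qed

lemma matrix_inv_eq:
  fixes A B :: "real^'n^'n"
  assumes "A ** B = mat 1" "B ** A = mat 1"
  shows "matrix_inv A = B"
proof -
  have "\<exists>A'. A ** A' = mat 1 \<and> A' ** A = mat 1" using assms by blast
  hence "A ** matrix_inv A = mat 1 \<and> matrix_inv A ** A = mat 1"
    unfolding matrix_inv_def by (rule someI_ex)
  hence "matrix_inv A = matrix_inv A ** (A ** B)" using assms by simp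
  also have "\<dots> = B" using \<open>A ** matrix_inv A = mat 1 \<and> matrix_inv A ** A = mat 1\<close>
    by (simp add: matrix_mul_assoc)
  finally show ?thesis .
qed

lemma sym_pos_spectral:
  fixes S :: "real^'n^'n"
  assumes "sym_pos_def S"
  shows "\<exists>V \<sigma>. orthogonal_matrix V \<and> (\<forall>i. 0 < \<sigma> i) \<and> S = V ** diag_mat \<sigma> ** transpose V"
proof -
  from assms have sym: "transpose S = S" and pd: "\<And>x. x \<noteq> 0 \<Longrightarrow> 0 < x \<bullet> (S *v x)"
    by (auto simp: sym_pos_def_def)
  obtain V \<sigma> where V: "orthogonal_matrix V" "\<forall>i. S *v column i V = \<sigma> i *\<^sub>R column i V"
     "S = V ** diag_mat \<sigma> ** transpose V"
    using spectral[OF sym] by blast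
  have "0 < \<sigma> i" for i
  proof -
    have n: "norm (column i V) = 1" using V(1) by (simp add: orthogonal_matrix_orthonormal_columns)
    hence "column i V \<noteq> 0" by auto
    hence "0 < column i V \<bullet> (S *v column i V)" by (rule pd)
    also have "\<dots> = \<sigma> i" using V(2) n by (simp add: norm_eq_1)
    finally show ?thesis .
  qed
  thus ?thesis using V by blast
qed

lemma inv_sqrt_prop:
  fixes S :: "real^'n^'n"
  assumes "sym_pos_def S"
  shows "a \<bullet> (matrix_inv S *v b) = (mat_inv_sqrt S *v a) \<bullet> (mat_inv_sqrt S *v b)"
proof -
  have "\<exists>M V \<sigma>. orthogonal_matrix V \<and> (\<forall>i. 0 < \<sigma> i) \<and>
       S = V ** diag_mat \<sigma> ** transpose V \<and>
       M = V ** diag_mat (\<lambda>i. 1 / sqrt (\<sigma> i)) ** transpose V"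
    using sym_pos_spectral[OF assms] by blast
  hence "\<exists>V \<sigma>. orthogonal_matrix V \<and> (\<forall>i. 0 < \<sigma> i) \<and>
       S = V ** diag_mat \<sigma> ** transpose V \<and>
       mat_inv_sqrt S = V ** diag_mat (\<lambda>i. 1 / sqrt (\<sigma> i)) ** transpose V"
    unfolding mat_inv_sqrt_def by (rule someI_ex)
  then obtain W \<tau> where W: "orthogonal_matrix W" "\<forall>i. 0 < \<tau> i"
    "S = W ** diag_mat \<tau> ** transpose W"
    "mat_inv_sqrt S = W ** diag_mat (\<lambda>i. 1 / sqrt (\<tau> i)) ** transpose W" by blast
  have WW: "transpose W ** W = mat 1" "W ** transpose W = mat 1"
    using W(1) by (auto simp: orthogonal_matrix_def)
  define P where "P = W ** diag_mat (\<lambda>i. 1 / \<tau> i) ** transpose W"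
  define M where "M = mat_inv_sqrt S"
  have "S ** P = W ** diag_mat (\<lambda>i. \<tau> i * (1 / \<tau> i)) ** transpose W"
    unfolding W(3) P_def by (simp add: conj_mult WW diag_mult)
  also have "\<dots> = mat 1" using W(2) WW by (subst diag_one) (auto simp: less_imp_neq[symmetric])
  finally have SP: "S ** P = mat 1" .
  have "P ** S = W ** diag_mat (\<lambda>i. (1 / \<tau> i) * \<tau> i) ** transpose W"
    unfolding W(3) P_def by (simp add: conj_mult WW diag_mult)
  also have "\<dots> = mat 1" using W(2) WW by (subst diag_one) (auto simp: less_imp_neq[symmetric])
  finally have PS: "P ** S = mat 1" .
  have inv: "matrix_inv S = P" by (rule matrix_inv_eq[OF SP PS])
  have MT: "transpose M = M"
    unfolding M_def W(4) by (simp add: matrix_transpose_mul diag_transpose matrix_mul_assoc)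
  have MM: "M ** M = P"
  proof -
    have "M ** M = W ** diag_mat (\<lambda>i. 1 / sqrt (\<tau> i) * (1 / sqrt (\<tau> i))) ** transpose W"
      unfolding M_def W(4) by (simp add: conj_mult WW diag_mult)
    also have "(\<lambda>i. 1 / sqrt (\<tau> i) * (1 / sqrt (\<tau> i))) = (\<lambda>i. 1 / \<tau> i)"
      using W(2) by (auto simp: less_imp_le)
    finally show ?thesis by (simp add: P_def)
  qed
  have "(M *v a) \<bullet> (M *v b) = (a v* transpose M) \<bullet> (M *v b)"
    by (metis transpose_matrix_vector transpose_transpose)
  also have "\<dots> = a \<bullet> (transpose M *v (M *v b))" by (rule dot_lmul_matrix)
  also have "\<dots> = a \<bullet> (P *v b)" by (simp add: MT MM matrix_vector_mul_assoc)
  finally show ?thesis by (simp add: inv M_def)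
qed



lemma mv_neg: "(A::real^'n^'m) *v (- y) = - (A *v y)"
  by (simp add: vec_eq_iff matrix_vector_mult_def sum_negf)

lemma far_dist:
  fixes A M :: "real^'n^'n"
  assumes ip: "\<And>a b. a \<bullet> (A *v b) = (M *v a) \<bullet> (M *v b)"
    and r: "r \<ge> 0" and far: "\<not> ((p - \<mu>) \<bullet> (A *v (p - \<mu>)) \<le> r\<^sup>2)"
  shows "norm (M *v (\<mu> - p)) > r"
proof -
  have "(p - \<mu>) \<bullet> (A *v (p - \<mu>)) = (norm (M *v (p - \<mu>)))\<^sup>2"
    by (simp add: ip power2_norm_eq_inner)
  also have "M *v (p - \<mu>) = - (M *v (\<mu> - p))"
  proof -
    have "p - \<mu> = - (\<mu> - p)" by simp
    then show ?thesis by (simp only: mv_neg)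
  qed
  finally have "r\<^sup>2 < (norm (M *v (\<mu> - p)))\<^sup>2" using far by simp
  thus ?thesis using r by (meson norm_ge_zero power2_less_imp_less)
qed

lemma inner_ineq:
  fixes A M :: "real^'n^'n"
  assumes ip: "\<And>a b. a \<bullet> (A *v b) = (M *v a) \<bullet> (M *v b)"
    and r: "r \<ge> 0" and dr: "norm (M *v (\<mu> - p)) > r"
    and e: "e > 0" and ball: "\<And>y. y \<in> ball x e \<Longrightarrow>
       (\<mu> - p) \<bullet> (A *v (y - p)) / (norm (M *v (\<mu> - p)))\<^sup>2
         \<le> max (1 - r / norm (M *v (\<mu> - p))) \<epsilon>"
    and eps: "\<epsilon> \<le> 0"
  shows "\<not> ((x - \<mu>) \<bullet> (A *v (x - \<mu>)) \<le> r\<^sup>2)"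
proof
  assume inR: "(x - \<mu>) \<bullet> (A *v (x - \<mu>)) \<le> r\<^sup>2"
  define v where "v = \<mu> - p"
  define d where "d = norm (M *v v)"
  have d: "d > r" "d > 0" using dr r by (auto simp: d_def v_def)
  have vne: "v \<noteq> 0" using d by (auto simp: d_def)
  have "r / d < 1" using d by simp
  hence max: "max (1 - r / d) \<epsilon> = 1 - r / d" using eps by (simp add: max_def)
  define t where "t = e / (2 * norm v)"
  have t: "t > 0" using e vne by (simp add: t_def)
  have "dist x (x + t *\<^sub>R v) = t * norm v" using t by (simp add: dist_norm)
  also have "\<dots> = e / 2" using vne by (simp add: t_def)
  finally have "x + t *\<^sub>R v \<in> ball x e" using e by simp
  hence "v \<bullet> (A *v (x + t *\<^sub>R v - p)) / d\<^sup>2 \<le> 1 - r / d"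
    using ball max by (simp add: v_def d_def)
  hence "v \<bullet> (A *v (x + t *\<^sub>R v - p)) \<le> (1 - r / d) * d\<^sup>2"
    using d by (simp add: divide_le_eq)
  also have "(1 - r / d) * d\<^sup>2 = d\<^sup>2 - r * d" using d by (simp add: field_simps power2_eq_square)
  also have "v \<bullet> (A *v (x + t *\<^sub>R v - p)) = v \<bullet> (A *v (x - p)) + t * d\<^sup>2"
  proof -
    have "x + t *\<^sub>R v - p = (x - p) + t *\<^sub>R v" by simp
    hence "v \<bullet> (A *v (x + t *\<^sub>R v - p)) = v \<bullet> (A *v (x - p)) + t * (v \<bullet> (A *v v))"
      by (simp only: matrix_vector_right_distrib matrix_vector_mult_scaleR inner_add_right inner_scaleR_right)
    also have "v \<bullet> (A *v v) = d\<^sup>2" by (simp add: ip d_def power2_norm_eq_inner)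
    finally show ?thesis .
  qed
  finally have le: "v \<bullet> (A *v (x - p)) + t * d\<^sup>2 \<le> d\<^sup>2 - r * d" .
  have td: "t * d\<^sup>2 > 0" using t d by simp
  have lt: "v \<bullet> (A *v (x - p)) < d\<^sup>2 - r * d" using le td by linarith
  have "d\<^sup>2 - v \<bullet> (A *v (x - p)) = v \<bullet> (A *v (\<mu> - x))"
  proof -
    have "\<mu> - x = v - (x - p)" by (simp add: v_def)
    hence "v \<bullet> (A *v (\<mu> - x)) = v \<bullet> (A *v v) - v \<bullet> (A *v (x - p))"
      by (simp only: matrix_vector_mult_diff_distrib inner_diff_right)
    also have "v \<bullet> (A *v v) = d\<^sup>2" by (simp add: ip d_def power2_norm_eq_inner)
    finally show ?thesis by simp
  qed
  also have "\<dots> = (M *v v) \<bullet> (M *v (\<mu> - x))" by (rule ip)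
  also have "\<dots> \<le> d * norm (M *v (\<mu> - x))" unfolding d_def by (rule norm_cauchy_schwarz)
  also have "norm (M *v (\<mu> - x)) \<le> r"
  proof -
    have "(norm (M *v (\<mu> - x)))\<^sup>2 = (\<mu> - x) \<bullet> (A *v (\<mu> - x))"
      by (simp add: ip power2_norm_eq_inner)
    also have "\<dots> = (x - \<mu>) \<bullet> (A *v (x - \<mu>))"
      proof -
      have "\<mu> - x = - (x - \<mu>)" by simp
      then show ?thesis by (simp only: mv_neg inner_minus_left inner_minus_right minus_minus)
    qed
    finally have "(norm (M *v (\<mu> - x)))\<^sup>2 \<le> r\<^sup>2" using inR by simp
    thus ?thesis using r by (rule power2_le_imp_le)
  qed
  hence "d * norm (M *v (\<mu> - x)) \<le> d * r" using d by (simp add: mult_left_mono)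
  finally have "d\<^sup>2 - v \<bullet> (A *v (x - p)) \<le> d * r" .
  thus False using lt by (simp add: algebra_simps)
qed

theorem proposition2:
  fixes K :: nat and \<mu> :: "nat \<Rightarrow> real^'n::finite" and \<Sigma> :: "nat \<Rightarrow> real^'n^'n"
    and \<kappa> :: "nat \<Rightarrow> real" and \<epsilon> :: real and p :: "real^'n"
  assumes "K \<ge> 1"
    and "\<And>k. k \<in> {1..K} \<Longrightarrow> sym_pos_def (\<Sigma> k)"
    and "\<And>k. k \<in> {1..K} \<Longrightarrow> 0 \<le> \<kappa> k \<and> \<kappa> k < 1"
    and "\<epsilon> \<le> 0"
    and "p \<notin> Rbar K \<mu> \<Sigma> \<kappa>"
  shows "p \<in> interior (Scorr K \<mu> \<Sigma> \<kappa> \<epsilon> p) \<and>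
         interior (Scorr K \<mu> \<Sigma> \<kappa> \<epsilon> p) \<subseteq> - Rbar K \<mu> \<Sigma> \<kappa>"
proof -
  note spd = assms(2) and kap = assms(3) and eps = assms(4) and pR = assms(5)
  define A where "A k = matrix_inv (\<Sigma> k)" for k
  define M where "M k = mat_inv_sqrt (\<Sigma> k)" for k
  define r where "r k = sqrt (chi2_cdf_inv CARD('n) (\<kappa> k))" for k
  define d where "d k = norm (M k *v (\<mu> k - p))" for k
  have ip: "a \<bullet> (A k *v b) = (M k *v a) \<bullet> (M k *v b)" if "k \<in> {1..K}" for k a b
    unfolding A_def M_def by (rule inv_sqrt_prop[OF spd[OF that]])
  have r: "r k \<ge> 0" if "k \<in> {1..K}" for k
    unfolding r_def using chi2_cdf_inv_nonneg[of "CARD('n)" "\<kappa> k"] kap[OF that] by simp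
  have far: "\<not> ((p - \<mu> k) \<bullet> (A k *v (p - \<mu> k)) \<le> (r k)\<^sup>2)" if "k \<in> {1..K}" for k
    using pR that unfolding Rbar_def A_def r_def by auto
  have dr: "d k > r k" if "k \<in> {1..K}" for k
    unfolding d_def by (rule far_dist[OF ip[OF that] r[OF that] far[OF that]])
  have Sc: "Scorr K \<mu> \<Sigma> \<kappa> \<epsilon> p = {x. \<forall>k\<in>{1..K}.
      (\<mu> k - p) \<bullet> (A k *v (x - p)) / (d k)\<^sup>2 \<le> max (1 - r k / d k) \<epsilon>}"
    unfolding Scorr_def A_def d_def r_def M_def by simp
  define U where "U = (\<Inter>k\<in>{1..K}. {x. (\<mu> k - p) \<bullet> (A k *v (x - p)) / (d k)\<^sup>2 < 1 - r k / d k})"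
  have "open U" unfolding U_def
  proof (intro open_INT ballI finite_atLeastAtMost)
    fix k assume k: "k \<in> {1..K}"
    have "d k \<noteq> 0" using dr[OF k] r[OF k] by simp
    have e: "(\<mu> k - p) \<bullet> (A k *v (x - p)) = ((\<mu> k - p) v* A k) \<bullet> (x - p)" for x
      by (simp add: dot_lmul_matrix)
    show "open {x. (\<mu> k - p) \<bullet> (A k *v (x - p)) / (d k)\<^sup>2 < 1 - r k / d k}"
      unfolding e using \<open>d k \<noteq> 0\<close> by (intro open_Collect_less continuous_intros) auto
  qed
  moreover have "p \<in> U"
  proof -
    have "0 < 1 - r k / d k" if "k \<in> {1..K}" for k
      using dr[OF that] r[OF that] by (simp add: field_simps)
    thus ?thesis by (simp add: U_def)
  qed
  moreover have "U \<subseteq> Scorr K \<mu> \<Sigma> \<kappa> \<epsilon> p"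
    unfolding Sc U_def by (auto intro: less_imp_le order.trans[OF _ max.cobounded1])
  ultimately have part1: "p \<in> interior (Scorr K \<mu> \<Sigma> \<kappa> \<epsilon> p)"
    by (meson interior_maximal subsetD)
  have part2: "x \<notin> Rbar K \<mu> \<Sigma> \<kappa>" if x: "x \<in> interior (Scorr K \<mu> \<Sigma> \<kappa> \<epsilon> p)" for x
  proof
    assume "x \<in> Rbar K \<mu> \<Sigma> \<kappa>"
    then obtain k where k: "k \<in> {1..K}" and inR: "(x - \<mu> k) \<bullet> (A k *v (x - \<mu> k)) \<le> (r k)\<^sup>2"
      unfolding Rbar_def A_def r_def by auto
    obtain e where e: "e > 0" "ball x e \<subseteq> Scorr K \<mu> \<Sigma> \<kappa> \<epsilon> p"
      using x mem_interior by blast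
    have "\<not> ((x - \<mu> k) \<bullet> (A k *v (x - \<mu> k)) \<le> (r k)\<^sup>2)"
    proof (rule inner_ineq[OF ip[OF k] r[OF k] _ e(1) _ eps])
      show "norm (M k *v (\<mu> k - p)) > r k" using dr[OF k] by (simp add: d_def)
      fix y assume "y \<in> ball x e"
      hence "y \<in> Scorr K \<mu> \<Sigma> \<kappa> \<epsilon> p" using e(2) by blast
      thus "(\<mu> k - p) \<bullet> (A k *v (y - p)) / (norm (M k *v (\<mu> k - p)))\<^sup>2
         \<le> max (1 - r k / norm (M k *v (\<mu> k - p))) \<epsilon>"
        unfolding Sc using k by (auto simp: d_def)
    qed
    thus False using inR by simp
  qed
  show ?thesis using part1 part2 by blast
qed


end
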